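(* Let $G=(V,A)$ be a directed graph in which each arc $(i,j)\in A$ carries basic costs $c_{ij}=(c^{ij}_1,\ldots,c^{ij}_r)\in\mathbb{R}^r$. Let $w=(o_w,d_w)$ be an origin–destination pair, and let $\Pi_w$ be the finite set of elementary directed paths from $o_w$ to $d_w$. For $\pi\in\Pi_w$ and $h\in\{1,\ldots,r\}$, let $\lambda_h(\pi)=\sum_{(i,j)\in\pi}c^{ij}_h$. Assume that there do not exist two distinct paths $\pi,\pi'\in\Pi_w$ with $\lambda_h(\pi)=\lambda_h(\pi')$ for all $h\in\{1,\ldots,r\}$. For $p\in\Delta_r$, let $S(w,p)$ be the set of paths in $\Pi_w$ minimizing $\sum_{h=1}^r p_h\lambda_h(\pi)$, that is, the shortest paths when arc $(i,j)$ has cost $c_{ij}^\top p$. Then the set $$\{p\in\Delta_r : |S(w,p)|>1\}$$ has null measure in $\Delta_r$.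
   Context: $\Delta_r=\{p\in\mathbb{R}^r_{\ge0} : \sum_{h=1}^r p_h=1\}$ is the unit simplex. It is an $(r-1)$-dimensional set, and measure on it is the $(r-1)$-dimensional Lebesgue measure. *)

theory Defs
  imports "HOL-Analysis.Analysis"
begin

text \<open>Directed graph given by its (finite) arc set A :: ('v \<times> 'v) set.
  Criteria are indexed by h \<in> {..<r} (i.e. 0,...,r-1 instead of 1,...,r).
  Basic arc costs: c :: 'v \<times> 'v \<Rightarrow> nat \<Rightarrow> real, c (i,j) h = c^{ij}_h.\<close>

definition elem_paths :: "('v \<times> 'v) set \<Rightarrow> 'v \<Rightarrow> 'v \<Rightarrow> 'v list set" where
  "elem_paths A o' d = {xs. xs \<noteq> [] \<and> hd xs = o' \<and> last xs = d \<and> distinct xs \<and>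
      (\<forall>e \<in> set (zip xs (tl xs)). e \<in> A)}"

definition path_arcs :: "'v list \<Rightarrow> ('v \<times> 'v) list" where
  "path_arcs xs = zip xs (tl xs)"

definition path_cost :: "('v \<times> 'v \<Rightarrow> nat \<Rightarrow> real) \<Rightarrow> nat \<Rightarrow> 'v list \<Rightarrow> real" where
  "path_cost c h xs = sum_list (map (\<lambda>e. c e h) (path_arcs xs))"

definition scal_cost :: "nat \<Rightarrow> ('v \<times> 'v \<Rightarrow> nat \<Rightarrow> real) \<Rightarrow> (nat \<Rightarrow> real) \<Rightarrow> 'v list \<Rightarrow> real" where
  "scal_cost r c p xs = (\<Sum>h<r. p h * path_cost c h xs)"

definition shortest_paths ::
  "('v \<times> 'v) set \<Rightarrow> nat \<Rightarrow> ('v \<times> 'v \<Rightarrow> nat \<Rightarrow> real) \<Rightarrow> 'v \<Rightarrow> 'v \<Rightarrow> (nat \<Rightarrow> real) \<Rightarrow> 'v list set" where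
  "shortest_paths A r c o' d p = {xs \<in> elem_paths A o' d.
      \<forall>ys \<in> elem_paths A o' d. scal_cost r c p xs \<le> scal_cost r c p ys}"

definition unit_simplex :: "nat \<Rightarrow> (nat \<Rightarrow> real) set" where
  "unit_simplex r = {p. (\<forall>h<r. 0 \<le> p h) \<and> (\<Sum>h<r. p h) = 1 \<and> (\<forall>h\<ge>r. p h = 0)}"

text \<open>A subset X of \<Delta>_r has null (r-1)-dimensional Lebesgue measure:
  its image under the affine chart p \<mapsto> (p_0,...,p_{r-2}) (dropping the last coordinate,
  which is determined by the others) is a null set of (r-1)-dimensional Lebesgue measure.\<close>
definition simplex_null :: "nat \<Rightarrow> (nat \<Rightarrow> real) set \<Rightarrow> bool" where
  "simplex_null r X \<longleftrightarrow>
     (\<lambda>p. restrict p {..<r-1}) ` X \<in> null_sets (PiM {..<r-1} (\<lambda>_. lborel))"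

end

theory Submission
  imports Defs
begin

lemma hyperplane_null:
  fixes b :: "nat \<Rightarrow> real"
  assumes k: "k < n" "b k \<noteq> 0"
  shows "{q \<in> space (PiM {..<n} (\<lambda>_. lborel)). (\<Sum>h<n. q h * b h) = c0}
         \<in> null_sets (PiM {..<n} (\<lambda>_. lborel))"
proof -
  interpret product_sigma_finite "\<lambda>_. lborel :: real measure" by standard
  define I where "I = {..<n} - {k}"
  have II: "insert k I = {..<n}" "finite I" "k \<notin> I" using k by (auto simp: I_def)
  define H where "H = {q \<in> space (PiM {..<n} (\<lambda>_. lborel)). (\<Sum>h<n. q h * b h) = c0}"
  have Hm: "H \<in> sets (PiM {..<n} (\<lambda>_. lborel))" unfolding H_def by measurable
  have "emeasure (PiM {..<n} (\<lambda>_. lborel)) H = (\<integral>\<^sup>+ x. indicator H x \<partial>PiM (insert k I) (\<lambda>_. lborel))"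
    using Hm II by (subst nn_integral_indicator) auto
  also have "\<dots> = (\<integral>\<^sup>+ x. (\<integral>\<^sup>+ y. indicator H (x(k := y)) \<partial>lborel) \<partial>PiM I (\<lambda>_. lborel))"
    using II Hm by (subst product_nn_integral_insert) auto
  also have "\<dots> = (\<integral>\<^sup>+ x. 0 \<partial>PiM I (\<lambda>_. lborel :: real measure))"
  proof (intro nn_integral_cong)
    fix x assume x: "x \<in> space (PiM I (\<lambda>_. lborel :: real measure))"
    define s where "s = (\<Sum>h\<in>I. x h * b h)"
    have "(\<lambda>y. indicator H (x(k := y)) :: ennreal) = indicator {(c0 - s) / b k}"
    proof
      fix y
      have sum: "(\<Sum>h<n. (x(k := y)) h * b h) = y * b k + s"
      proof -
        have "(\<Sum>h<n. (x(k := y)) h * b h) = (\<Sum>h\<in>insert k I. (x(k := y)) h * b h)"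
          using II(1) by simp
        also have "\<dots> = y * b k + (\<Sum>h\<in>I. (x(k := y)) h * b h)"
          using II(2,3) by (simp add: sum.insert)
        also have "(\<Sum>h\<in>I. (x(k := y)) h * b h) = s"
          unfolding s_def using II by (intro sum.cong) auto
        finally show ?thesis .
      qed
      have sp: "x(k := y) \<in> space (PiM {..<n} (\<lambda>_. lborel :: real measure))"
        using x II k by (auto simp: space_PiM PiE_def extensional_def)
      show "indicator H (x(k := y)) = (indicator {(c0 - s) / b k} y :: ennreal)"
        using sp sum k by (auto simp: H_def indicator_def field_simps)
    qed
    then show "(\<integral>\<^sup>+ y. indicator H (x(k := y)) \<partial>lborel) = 0" by simp
  qed
  also have "\<dots> = 0" by simp
  finally show ?thesis using Hm unfolding H_def[symmetric] by (simp add: null_sets_def)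
qed

lemma elem_paths_finite:
  assumes "finite A"
  shows "finite (elem_paths A o' d)"
proof -
  have sub: "elem_paths A o' d \<subseteq> {xs. set xs \<subseteq> insert o' (snd ` A) \<and> distinct xs}"
  proof
    fix xs assume xs: "xs \<in> elem_paths A o' d"
    have "set xs \<subseteq> insert o' (snd ` A)"
    proof
      fix x assume x: "x \<in> set xs"
      have "xs \<noteq> []" "hd xs = o'" using xs by (auto simp: elem_paths_def)
      then obtain ys where axs: "xs = o' # ys"
        by (cases xs) auto
      have "map snd (zip xs (tl xs)) = ys" using axs by (simp add: map_snd_zip_take)
      then have "set ys \<subseteq> snd ` set (zip xs (tl xs))" by (metis set_map order_refl)
      moreover have "set (zip xs (tl xs)) \<subseteq> A" using xs by (auto simp: elem_paths_def)
      ultimately show "x \<in> insert o' (snd ` A)" using x axs by auto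
    qed
    moreover have "distinct xs" using xs by (simp add: elem_paths_def)
    ultimately show "xs \<in> {xs. set xs \<subseteq> insert o' (snd ` A) \<and> distinct xs}" by simp
  qed
  have "finite {xs. set xs \<subseteq> insert o' (snd ` A) \<and> distinct xs}"
    using assms by (intro finite_subset_distinct) auto
  then show ?thesis using sub by (rule rev_finite_subset)
qed

lemma scal_cost_restrict:
  assumes "r = Suc n" "(\<Sum>h<r. p h) = 1"
  shows "scal_cost r c p xs =
    (\<Sum>h<n. restrict p {..<n} h * path_cost c h xs) +
    (1 - (\<Sum>h<n. restrict p {..<n} h)) * path_cost c n xs"
proof -
  have "p n = 1 - (\<Sum>h<n. p h)" using assms by simp
  then show ?thesis unfolding scal_cost_def using assms by simp
qed

lemma Y_meas:
  fixes n :: nat and P :: "'a set" and F :: "'a \<Rightarrow> (nat \<Rightarrow> real) \<Rightarrow> real"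
  assumes finP: "finite P"
    and Fm: "\<And>\<pi>. F \<pi> \<in> borel_measurable (PiM {..<n} (\<lambda>_. lborel :: real measure))"
  shows "{q \<in> space (PiM {..<n} (\<lambda>_. lborel :: real measure)). (\<forall>h<n. 0 \<le> q h) \<and> (\<Sum>h<n. q h) \<le> 1 \<and>
     (\<exists>\<pi>\<in>P. \<exists>\<pi>'\<in>P. \<pi> \<noteq> \<pi>' \<and> (\<forall>ys\<in>P. F \<pi> q \<le> F ys q) \<and> (\<forall>ys\<in>P. F \<pi>' q \<le> F ys q))}
     \<in> sets (PiM {..<n} (\<lambda>_. lborel :: real measure))"
proof -
  have S: "(\<lambda>(q :: nat \<Rightarrow> real). (\<Sum>h<n. q h)) \<in> borel_measurable (PiM {..<n} (\<lambda>_. lborel :: real measure))"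
    by measurable
  have c: "(\<lambda>q. q h) \<in> borel_measurable (PiM {..<n} (\<lambda>_. lborel :: real measure))" if "h \<in> {..<n}" for h
    using that by (metis measurable_component_singleton measurable_lborel1)
  have "{q \<in> space (PiM {..<n} (\<lambda>_. lborel :: real measure)). (\<forall>h\<in>{..<n}. 0 \<le> q h) \<and> (\<Sum>h<n. q h) \<le> 1 \<and>
     (\<exists>\<pi>\<in>P. \<exists>\<pi>'\<in>P. \<pi> \<noteq> \<pi>' \<and> (\<forall>ys\<in>P. F \<pi> q \<le> F ys q) \<and> (\<forall>ys\<in>P. F \<pi>' q \<le> F ys q))}
     \<in> sets (PiM {..<n} (\<lambda>_. lborel :: real measure))"
    apply (intro sets.sets_Collect_conj sets.sets_Collect_finite_All sets.sets_Collect_finite_Ex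
        sets.sets_Collect_const borel_measurable_le Fm S c borel_measurable_const finP finite_lessThan)
    apply assumption
    done
  then show ?thesis by (simp only: lessThan_iff Ball_def)
qed

theorem lemma1:
  fixes A :: "('v \<times> 'v) set" and c :: "'v \<times> 'v \<Rightarrow> nat \<Rightarrow> real"
    and r :: nat and o' d :: 'v
  assumes "finite A"
    and "\<not> (\<exists>\<pi> \<in> elem_paths A o' d. \<exists>\<pi>' \<in> elem_paths A o' d.
              \<pi> \<noteq> \<pi>' \<and> (\<forall>h<r. path_cost c h \<pi> = path_cost c h \<pi>'))"
  shows "simplex_null r {p \<in> unit_simplex r. card (shortest_paths A r c o' d p) > 1}"
proof (cases r)
  case 0
  then have "unit_simplex r = {}" by (simp add: unit_simplex_def)
  then show ?thesis by (simp add: simplex_null_def)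
next
  case (Suc n)
  define P where "P = elem_paths A o' d"
  have finP: "finite P" unfolding P_def using assms(1) by (rule elem_paths_finite)
  define M where "M = PiM {..<n} (\<lambda>_. lborel :: real measure)"
  define L where "L = (\<lambda>\<pi> h. path_cost c h \<pi>)"
  define F where "F = (\<lambda>\<pi> (q :: nat \<Rightarrow> real). (\<Sum>h<n. q h * L \<pi> h) + (1 - (\<Sum>h<n. q h)) * L \<pi> n)"
  define Y where "Y = {q \<in> space M. (\<forall>h<n. 0 \<le> q h) \<and> (\<Sum>h<n. q h) \<le> 1 \<and>
     (\<exists>\<pi>\<in>P. \<exists>\<pi>'\<in>P. \<pi> \<noteq> \<pi>' \<and> (\<forall>ys\<in>P. F \<pi> q \<le> F ys q) \<and> (\<forall>ys\<in>P. F \<pi>' q \<le> F ys q))}"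
  define X where "X = {p \<in> unit_simplex r. card (shortest_paths A r c o' d p) > 1}"
  have rn: "r - 1 = n" using Suc by simp
  have key: "scal_cost r c p xs = F xs (restrict p {..<n})" if "p \<in> unit_simplex r" for p xs
    using scal_cost_restrict[OF Suc, of p c xs] that unfolding F_def L_def unit_simplex_def by simp
  have img: "(\<lambda>p. restrict p {..<n}) ` X = Y"
  proof safe
    fix p assume pX: "p \<in> X"
    then have ps: "p \<in> unit_simplex r" by (simp add: X_def)
    have "card (shortest_paths A r c o' d p) > 1" using pX by (simp add: X_def)
    moreover have "finite (shortest_paths A r c o' d p)"
      using calculation by (intro card_ge_0_finite) simp
    ultimately have "\<not> (\<forall>a\<in>shortest_paths A r c o' d p. \<forall>b\<in>shortest_paths A r c o' d p. a = b)"
      using card_le_Suc0_iff_eq by fastforce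
    then obtain a b where ab: "a \<in> shortest_paths A r c o' d p" "b \<in> shortest_paths A r c o' d p" "a \<noteq> b"
      by blast
    have pn: "p n = 1 - (\<Sum>h<n. p h)" "0 \<le> p n" using ps Suc by (auto simp: unit_simplex_def)
    show "restrict p {..<n} \<in> Y"
      unfolding Y_def
    proof (intro CollectI conjI)
      show "restrict p {..<n} \<in> space M" by (simp add: M_def space_PiM)
      show "\<forall>h<n. 0 \<le> restrict p {..<n} h" using ps Suc by (auto simp: unit_simplex_def)
      show "(\<Sum>h<n. restrict p {..<n} h) \<le> 1" using pn by simp
      show "\<exists>\<pi>\<in>P. \<exists>\<pi>'\<in>P. \<pi> \<noteq> \<pi>' \<and> (\<forall>ys\<in>P. F \<pi> (restrict p {..<n}) \<le> F ys (restrict p {..<n})) \<and>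
          (\<forall>ys\<in>P. F \<pi>' (restrict p {..<n}) \<le> F ys (restrict p {..<n}))"
        using ab key[OF ps] unfolding P_def shortest_paths_def by auto
    qed
  next
    fix q assume qY: "q \<in> Y"
    define p where "p = (\<lambda>h. if h < n then q h else if h = n then 1 - (\<Sum>h<n. q h) else 0)"
    have qsp: "q \<in> extensional {..<n}" using qY by (auto simp: Y_def M_def space_PiM PiE_def)
    have rq: "restrict p {..<n} = q"
      using qsp unfolding p_def by (auto simp: restrict_def extensional_def)
    have sp: "(\<Sum>h<n. p h) = (\<Sum>h<n. q h)" unfolding p_def by simp
    have ps: "p \<in> unit_simplex r"
      using qY Suc sp unfolding unit_simplex_def Y_def by (auto simp: p_def)
    obtain a b where ab: "a \<in> P" "b \<in> P" "a \<noteq> b" "\<forall>ys\<in>P. F a q \<le> F ys q" "\<forall>ys\<in>P. F b q \<le> F ys q"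
      using qY by (auto simp: Y_def)
    have "{a, b} \<subseteq> shortest_paths A r c o' d p"
      using ab key[OF ps] rq unfolding P_def shortest_paths_def by auto
    moreover have "finite (shortest_paths A r c o' d p)"
      using finP unfolding P_def shortest_paths_def by (rule rev_finite_subset) auto
    ultimately have "card {a, b} \<le> card (shortest_paths A r c o' d p)" by (rule card_mono[rotated])
    then have "p \<in> X" using ab ps by (simp add: X_def)
    then show "q \<in> (\<lambda>p. restrict p {..<n}) ` X" using rq by force
  qed
  have Ymeas: "Y \<in> sets M"
  proof -
    have "F \<pi> \<in> borel_measurable (PiM {..<n} (\<lambda>_. lborel :: real measure))" for \<pi>
      unfolding F_def by measurable
    from Y_meas[OF finP this] show ?thesis unfolding Y_def M_def .
  qed
  define H where "H = (\<lambda>(\<pi>, \<pi>'). {q \<in> space M. (\<Sum>h<n. q h * ((L \<pi> h - L \<pi>' h) - (L \<pi> n - L \<pi>' n)))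
      = - (L \<pi> n - L \<pi>' n)})"
  have YH: "Y \<subseteq> (\<Union>pp\<in>{pp \<in> P \<times> P. fst pp \<noteq> snd pp}. H pp)"
  proof
    fix q assume qY: "q \<in> Y"
    obtain a b where ab: "a \<in> P" "b \<in> P" "a \<noteq> b" "\<forall>ys\<in>P. F a q \<le> F ys q" "\<forall>ys\<in>P. F b q \<le> F ys q"
      using qY by (auto simp: Y_def)
    have "F a q = F b q" using ab by (meson order_antisym)
    then have "(\<Sum>h<n. q h * L a h) + (1 - (\<Sum>h<n. q h)) * L a n
             = (\<Sum>h<n. q h * L b h) + (1 - (\<Sum>h<n. q h)) * L b n" by (simp add: F_def)
    moreover have "(\<Sum>h<n. q h * ((L a h - L b h) - (L a n - L b n)))
       = (\<Sum>h<n. q h * L a h) - (\<Sum>h<n. q h * L b h) - (\<Sum>h<n. q h) * (L a n - L b n)"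
    proof -
      have "(\<Sum>h<n. q h * ((L a h - L b h) - (L a n - L b n)))
          = (\<Sum>h<n. q h * L a h - q h * L b h - q h * (L a n - L b n))"
        by (intro sum.cong) (simp_all add: algebra_simps)
      also have "\<dots> = (\<Sum>h<n. q h * L a h) - (\<Sum>h<n. q h * L b h) - (\<Sum>h<n. q h) * (L a n - L b n)"
        by (simp only: sum_subtractf sum_distrib_right)
      finally show ?thesis .
    qed
    ultimately have "(\<Sum>h<n. q h * ((L a h - L b h) - (L a n - L b n))) = - (L a n - L b n)"
      by (simp add: algebra_simps)
    then have "q \<in> H (a, b)" using qY by (simp add: H_def Y_def)
    then show "q \<in> (\<Union>pp\<in>{pp \<in> P \<times> P. fst pp \<noteq> snd pp}. H pp)" using ab by force
  qed
  have Hnull: "H pp \<in> null_sets M" if pp: "pp \<in> {pp \<in> P \<times> P. fst pp \<noteq> snd pp}" for pp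
  proof -
    obtain a b where ab: "pp = (a, b)" "a \<in> P" "b \<in> P" "a \<noteq> b" using pp by auto
    show ?thesis
    proof (cases "\<exists>k<n. L a k - L b k - (L a n - L b n) \<noteq> 0")
      case True
      then obtain k where k: "k < n" "L a k - L b k - (L a n - L b n) \<noteq> 0" by auto
      from hyperplane_null[where b = "\<lambda>h. L a h - L b h - (L a n - L b n)", OF k, of "- (L a n - L b n)"]
      show ?thesis by (simp add: ab H_def M_def)
    next
      case False
      have "L a n - L b n \<noteq> 0"
      proof
        assume z: "L a n - L b n = 0"
        have "\<forall>h<r. path_cost c h a = path_cost c h b"
        proof (intro allI impI)
          fix h assume "h < r"
          then have "h < n \<or> h = n" using Suc by auto
          then show "path_cost c h a = path_cost c h b" using False z by (auto simp: L_def)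
        qed
        then show False using assms(2) ab unfolding P_def by blast
      qed
      then have "H pp = {}" using False by (simp add: ab H_def)
      then show ?thesis by simp
    qed
  qed
  have "(\<Union>pp\<in>{pp \<in> P \<times> P. fst pp \<noteq> snd pp}. H pp) \<in> null_sets M"
    using finP by (intro null_sets_UN' Hnull) (auto intro: countable_finite)
  then have "Y \<inter> (\<Union>pp\<in>{pp \<in> P \<times> P. fst pp \<noteq> snd pp}. H pp) \<in> null_sets M"
    using Ymeas by (rule null_set_Int1)
  then have "Y \<in> null_sets M" using YH by (simp add: Int_absorb2)
  then show ?thesis
    unfolding simplex_null_def rn img[unfolded X_def] M_def .
qed

end
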